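(* Let $\lambda$ be a nonzero real number. For every integer $n\ge 0$, $$\sum_{k=0}^{n}S_{2,\lambda}(n,k)\,2^{-k}(-1)^{k}k!=W_{n,\lambda}\!\left(-\tfrac{1}{2}\right)=\frac{2}{n+1}\Big(\beta_{n+1,\lambda}-2^{n+1}\beta_{n+1,\frac{\lambda}{2}}\Big).$$
   Context: For nonzero $\lambda\in\mathbb{R}$, $e_{\lambda}(t)=(1+\lambda t)^{1/\lambda}$; $(x)_{0,\lambda}=1$, $(x)_{n,\lambda}=x(x-\lambda)\cdots(x-(n-1)\lambda)$ for $n\ge1$; $(x)_0=1$, $(x)_n=x(x-1)\cdots(x-n+1)$. The degenerate Stirling numbers of the second kind $S_{2,\lambda}(n,k)$ are defined by $(x)_{n,\lambda}=\sum_{k=0}^{n}S_{2,\lambda}(n,k)(x)_{k}$. The degenerate geometric polynomials are $W_{n,\lambda}(x)=\sum_{k=0}^{n}S_{2,\lambda}(n,k)\,k!\,x^{k}$. The Carlitz degenerate Bernoulli numbers $\beta_{n,\mu}$ (for nonzero $\mu$) are defined by $\frac{t}{e_{\mu}(t)-1}=\sum_{n=0}^{\infty}\beta_{n,\mu}\frac{t^{n}}{n!}$. *)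

theory Defs
  imports "HOL-Analysis.Analysis"
begin

text \<open>Degenerate exponential e_lambda(t) = (1 + lambda t)^(1/lambda) (real power; meaningful for 1 + lambda t > 0).\<close>
definition deg_exp :: "real \<Rightarrow> real \<Rightarrow> real" where
  "deg_exp lam t = (1 + lam * t) powr (1 / lam)"

definition deg_ff :: "real \<Rightarrow> real \<Rightarrow> nat \<Rightarrow> real" where
  "deg_ff lam x n = (\<Prod>i<n. x - real i * lam)"

definition ffac :: "real \<Rightarrow> nat \<Rightarrow> real" where
  "ffac x n = (\<Prod>i<n. x - real i)"

definition deg_stirling2 :: "real \<Rightarrow> nat \<Rightarrow> nat \<Rightarrow> real" where
  "deg_stirling2 lam n = (THE c. (\<forall>x. deg_ff lam x n = (\<Sum>k\<le>n. c k * ffac x k))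
                                 \<and> (\<forall>k>n. c k = 0))"

definition deg_geom :: "real \<Rightarrow> nat \<Rightarrow> real \<Rightarrow> real" where
  "deg_geom lam n x = (\<Sum>k\<le>n. deg_stirling2 lam n k * fact k * x ^ k)"

definition carlitz_bernoulli :: "real \<Rightarrow> nat \<Rightarrow> real" where
  "carlitz_bernoulli mu = (THE b. \<exists>r>0. \<forall>t. 0 < \<bar>t\<bar> \<and> \<bar>t\<bar> < r \<longrightarrow>
       (\<lambda>n. b n * t ^ n / fact n) sums (t / (deg_exp mu t - 1)))"

end

theory Submission
  imports Defs
begin

definition Ef :: "real \<Rightarrow> real fps" where
  "Ef l = Abs_fps (\<lambda>n. ((1/l) gchoose n) * l^n)"

lemma Ef_rec:
  assumes "l \<noteq> 0"
  shows "of_nat (Suc n) * fps_nth (Ef l) (Suc n) = (1 - real n * l) * fps_nth (Ef l) n"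
proof -
  have g: "of_nat (Suc n) * ((1/l) gchoose Suc n) = (1/l - real n) * ((1/l) gchoose n)"
    using gbinomial_mult_1[of "1/l" n] by (simp add: algebra_simps)
  have "of_nat (Suc n) * fps_nth (Ef l) (Suc n) = (of_nat (Suc n) * ((1/l) gchoose Suc n)) * l^Suc n"
    by (simp add: Ef_def)
  also have "\<dots> = (1/l - real n) * l * (((1/l) gchoose n) * l^n)"
    by (simp only: g) (simp add: algebra_simps)
  also have "\<dots> = (1 - real n * l) * fps_nth (Ef l) n"
    using assms by (simp add: Ef_def field_simps)
  finally show ?thesis .
qed

lemma Ef_0 [simp]: "fps_nth (Ef l) 0 = 1" by (simp add: Ef_def)

lemma ode_nth:
  "fps_nth ((1 + fps_const l * fps_X) * fps_deriv G) n = of_nat (n+1) * fps_nth G (n+1) + l * of_nat n * fps_nth G n"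
proof (cases n)
  case 0 then show ?thesis by (simp add: distrib_right mult.assoc)
next
  case (Suc m) then show ?thesis by (simp add: distrib_right mult.assoc algebra_simps)
qed

lemma Ef_ode:
  assumes "l \<noteq> 0"
  shows "(1 + fps_const l * fps_X) * fps_deriv (Ef l) = Ef l"
proof (rule fps_ext)
  fix n
  show "fps_nth ((1 + fps_const l * fps_X) * fps_deriv (Ef l)) n = fps_nth (Ef l) n"
    unfolding ode_nth using Ef_rec[OF assms, of n] by (simp add: algebra_simps)
qed


lemma Dpow_ode:
  assumes "l \<noteq> 0"
  shows "(1 + fps_const l * fps_X) * fps_deriv ((Ef l - 1)^Suc m)
         = fps_const (of_nat (Suc m)) * ((Ef l - 1)^Suc m + (Ef l - 1)^m)"
proof -
  have "(1 + fps_const l * fps_X) * fps_deriv ((Ef l - 1)^Suc m)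
      = fps_const (of_nat (Suc m)) * ((1 + fps_const l * fps_X) * fps_deriv (Ef l)) * (Ef l - 1)^m"
  proof -
    have "fps_deriv ((Ef l - 1)^Suc m) = fps_const (of_nat (Suc m)) * fps_deriv (Ef l - 1) * (Ef l - 1)^m"
      using fps_deriv_power[of "Ef l - 1" "Suc m"] by (simp only: diff_Suc_1)
    also have "fps_deriv (Ef l - 1) = fps_deriv (Ef l)" by simp
    finally show ?thesis by (simp only: mult_ac)
  qed
  also have "\<dots> = fps_const (of_nat (Suc m)) * ((Ef l - 1) + 1) * (Ef l - 1)^m"
    using Ef_ode[OF assms] by simp
  also have "\<dots> = fps_const (of_nat (Suc m)) * ((Ef l - 1)^Suc m + (Ef l - 1)^m)"
    by (simp add: algebra_simps)
  finally show ?thesis .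
qed

lemma Dpow_rec:
  assumes "l \<noteq> 0"
  shows "of_nat (n+1) * fps_nth ((Ef l - 1)^Suc m) (n+1) + l * of_nat n * fps_nth ((Ef l - 1)^Suc m) n
         = of_nat (Suc m) * (fps_nth ((Ef l - 1)^Suc m) n + fps_nth ((Ef l - 1)^m) n)"
  using arg_cong[OF Dpow_ode[OF assms, of m], of "\<lambda>F. fps_nth F n"]
  by (simp only: ode_nth fps_mult_left_const_nth fps_add_nth)

fun S2 :: "real \<Rightarrow> nat \<Rightarrow> nat \<Rightarrow> real" where
  "S2 l 0 k = (if k = 0 then 1 else 0)"
| "S2 l (Suc n) k = (if k = 0 then 0 else S2 l n (k - 1)) + (real k - real n * l) * S2 l n k"

lemma S2_fps:
  assumes "l \<noteq> 0"
  shows "S2 l n k = fact n / fact k * fps_nth ((Ef l - 1)^k) n"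
proof (induction n arbitrary: k)
  case 0
  then show ?case by (simp add: fps_nth_power_0)
next
  case (Suc n)
  show ?case
  proof (cases k)
    case 0
    then show ?thesis using Suc.IH[of 0] by (cases "n = 0") auto
  next
    case (Suc m)
    define a where "a = fps_nth ((Ef l - 1)^m) n"
    define b where "b = fps_nth ((Ef l - 1)^Suc m) n"
    define c where "c = fps_nth ((Ef l - 1)^Suc m) (Suc n)"
    have r: "of_nat (n+1) * c + l * of_nat n * b = of_nat (Suc m) * (b + a)"
      using Dpow_rec[OF assms, of n m] unfolding a_def b_def c_def by simp
    have "S2 l (Suc n) k = fact n / fact m * a + (real (Suc m) - real n * l) * (fact n / fact (Suc m) * b)"
      using Suc.IH[of m] Suc.IH[of "Suc m"] \<open>k = Suc m\<close> a_def b_def by simp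
    also have "\<dots> = fact n / fact (Suc m) * (of_nat (Suc m) * (b + a) - l * of_nat n * b)"
      by (simp add: field_simps del: of_nat_Suc)
    also have "\<dots> = fact (Suc n) / fact (Suc m) * c"
    proof -
      have "of_nat (Suc m) * (b + a) - l * of_nat n * b = of_nat (Suc n) * c" using r by simp
      then show ?thesis by (simp add: fact_Suc del: of_nat_Suc)
    qed
    finally show ?thesis using \<open>k = Suc m\<close> c_def by simp
  qed
qed

definition sc :: "real \<Rightarrow> real fps \<Rightarrow> real fps" where
  "sc c F = Abs_fps (\<lambda>n. c^n * fps_nth F n)"

lemma sc_mult: "sc c (F * G) = sc c F * sc c G"
proof (rule fps_ext)
  fix n
  have "fps_nth (sc c (F * G)) n = (\<Sum>i=0..n. c^n * (fps_nth F i * fps_nth G (n - i)))"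
    by (simp add: sc_def fps_mult_nth sum_distrib_left)
  also have "\<dots> = (\<Sum>i=0..n. (c^i * fps_nth F i) * (c^(n-i) * fps_nth G (n - i)))"
  proof (rule sum.cong)
    fix i assume "i \<in> {0..n}"
    then have "i + (n - i) = n" by simp
    then have "c^n = c^i * c^(n-i)" by (metis power_add)
    then show "c^n * (fps_nth F i * fps_nth G (n - i)) = (c^i * fps_nth F i) * (c^(n-i) * fps_nth G (n - i))"
      by simp
  qed simp
  also have "\<dots> = fps_nth (sc c F * sc c G) n" by (simp add: sc_def fps_mult_nth)
  finally show "fps_nth (sc c (F * G)) n = fps_nth (sc c F * sc c G) n" .
qed

lemma sc_diff: "sc c (F - G) = sc c F - sc c G"
  by (rule fps_ext) (simp add: sc_def algebra_simps)

lemma sc_1: "sc c 1 = 1"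
  by (rule fps_ext) (simp add: sc_def)

lemma sc_X: "sc c fps_X = fps_const c * fps_X"
proof (rule fps_ext)
  fix n show "fps_nth (sc c fps_X) n = fps_nth (fps_const c * fps_X) n"
    by (cases "n = 1") (simp_all add: sc_def)
qed

lemma Ef_sq:
  assumes "l \<noteq> 0"
  shows "(Ef l)^2 = sc 2 (Ef (l/2))"
proof -
  have ode: "(1 + fps_const l * fps_X) * fps_deriv ((Ef l)^2) = 2 * (Ef l)^2"
  proof -
    have "(1 + fps_const l * fps_X) * fps_deriv ((Ef l)^2)
        = 2 * ((1 + fps_const l * fps_X) * fps_deriv (Ef l)) * Ef l"
      by (simp add: fps_deriv_power' mult_ac)
    also have "\<dots> = 2 * (Ef l)^2" using Ef_ode[OF assms] by (simp add: power2_eq_square)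
    finally show ?thesis .
  qed
  have r1: "of_nat (n+1) * fps_nth ((Ef l)^2) (n+1) = (2 - real n * l) * fps_nth ((Ef l)^2) n" for n
    using arg_cong[OF ode, of "\<lambda>F. fps_nth F n"] unfolding ode_nth by (simp add: algebra_simps)
  have l2: "l/2 \<noteq> 0" using assms by simp
  have r2: "of_nat (n+1) * fps_nth (sc 2 (Ef (l/2))) (n+1) = (2 - real n * l) * fps_nth (sc 2 (Ef (l/2))) n" for n
  proof -
    have "of_nat (n+1) * fps_nth (sc 2 (Ef (l/2))) (n+1) = 2^(n+1) * (of_nat (Suc n) * fps_nth (Ef (l/2)) (Suc n))"
      by (simp add: sc_def)
    also have "\<dots> = 2^(n+1) * ((1 - real n * (l/2)) * fps_nth (Ef (l/2)) n)"
      by (simp only: Ef_rec[OF l2])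
    also have "\<dots> = (2 - real n * l) * fps_nth (sc 2 (Ef (l/2))) n"
      by (simp add: sc_def field_simps)
    finally show ?thesis .
  qed
  have "fps_nth ((Ef l)^2) n = fps_nth (sc 2 (Ef (l/2))) n" for n
  proof (induction n)
    case 0
    then show ?case by (simp add: sc_def fps_nth_power_0)
  next
    case (Suc n)
    have "of_nat (n+1) * fps_nth ((Ef l)^2) (n+1) = of_nat (n+1) * fps_nth (sc 2 (Ef (l/2))) (n+1)"
      using r1[of n] r2[of n] Suc by simp
    then show ?case by simp
  qed
  then show ?thesis by (rule fps_ext)
qed


lemma pow_vanish:
  fixes F :: "real fps"
  assumes "fps_nth F 0 = 0" "i < k"
  shows "fps_nth (F^k) i = 0"
proof -
  have F: "F = fps_X * fps_shift 1 F"
  proof (rule fps_ext)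
    fix n show "fps_nth F n = fps_nth (fps_X * fps_shift 1 F) n"
      using assms(1) by (cases n) simp_all
  qed
  have "F^k = (fps_X * fps_shift 1 F)^k" using F by simp
  also have "\<dots> = fps_X^k * (fps_shift 1 F)^k" by (rule power_mult_distrib)
  finally have "F^k = fps_X^k * (fps_shift 1 F)^k" .
  then show ?thesis using assms(2) by (simp add: fps_X_power_mult_nth)
qed

lemma W_fps:
  fixes D :: "real fps"
  assumes D0: "fps_nth D 0 = 0"
  shows "Abs_fps (\<lambda>n. \<Sum>k\<le>n. c^k * fps_nth (D^k) n) * (1 - fps_const c * D) = 1"
proof (rule fps_ext)
  fix m
  define T where "T = (\<Sum>k\<le>m. (fps_const c * D)^k)"
  have Tn: "fps_nth T i = (\<Sum>k\<le>i. c^k * fps_nth (D^k) i)" if "i \<le> m" for i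
  proof -
    have "fps_nth T i = (\<Sum>k\<le>m. c^k * fps_nth (D^k) i)"
      by (simp add: T_def fps_sum_nth power_mult_distrib)
    also have "\<dots> = (\<Sum>k\<le>i. c^k * fps_nth (D^k) i)"
      using that by (intro sum.mono_neutral_right) (auto simp: pow_vanish[OF D0])
    finally show ?thesis .
  qed
  have "fps_nth (Abs_fps (\<lambda>n. \<Sum>k\<le>n. c^k * fps_nth (D^k) n) * (1 - fps_const c * D)) m
      = (\<Sum>i=0..m. fps_nth T i * fps_nth (1 - fps_const c * D) (m - i))"
    by (simp add: fps_mult_nth Tn)
  also have "\<dots> = fps_nth ((1 - fps_const c * D) * T) m"
    by (simp add: fps_mult_nth mult.commute)
  also have "(1 - fps_const c * D) * T = 1 - (fps_const c * D)^Suc m"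
    unfolding T_def by (rule sum_gp_basic)
  also have "fps_nth (1 - (fps_const c * D)^Suc m) m = fps_nth (1::real fps) m"
    by (simp add: power_mult_distrib pow_vanish[OF D0] del: power_Suc)
  finally show "fps_nth (Abs_fps (\<lambda>n. \<Sum>k\<le>n. c^k * fps_nth (D^k) n) * (1 - fps_const c * D)) m = fps_nth 1 m" .
qed

lemma D_0 [simp]: "fps_nth (Ef l - 1) 0 = 0" by simp

lemma D_1: "l \<noteq> 0 \<Longrightarrow> fps_nth (Ef l - 1) 1 = 1" by (simp add: Ef_def)

lemma main_alg:
  assumes l: "l \<noteq> 0"
    and hB: "(Ef l - 1) * B = fps_X"
    and hB2: "(Ef (l/2) - 1) * B2 = fps_X"
    and hW: "W * (Ef l + 1) = 2"
  shows "fps_X * W = 2 * (B - sc 2 B2)"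
proof -
  let ?E = "Ef l"
  have "sc 2 ((Ef (l/2) - 1) * B2) = sc 2 fps_X" using hB2 by simp
  then have h2: "(?E^2 - 1) * sc 2 B2 = 2 * fps_X"
    by (simp add: sc_mult sc_diff sc_1 sc_X Ef_sq[OF l] numeral_fps_const)
  define G where "G = B - sc 2 B2"
  have "(?E - 1) * ((?E + 1) * G) = (?E + 1) * ((?E - 1) * B) - (?E^2 - 1) * sc 2 B2"
    by (simp add: G_def algebra_simps power2_eq_square)
  also have "\<dots> = (?E - 1) * fps_X"
    using hB h2 by (simp add: algebra_simps)
  finally have "(?E - 1) * ((?E + 1) * G) = (?E - 1) * fps_X" .
  moreover have "?E - 1 \<noteq> 0"
  proof
    assume "?E - 1 = 0"
    then have "fps_nth (?E - 1) 1 = 0" by simp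
    with D_1[OF l] show False by simp
  qed
  ultimately have EG: "(?E + 1) * G = fps_X" by simp
  have "(?E + 1) * (fps_X * W) = fps_X * (W * (?E + 1))" by (simp add: mult_ac)
  also have "\<dots> = 2 * fps_X" using hW by (simp add: mult_ac)
  also have "\<dots> = (?E + 1) * (2 * G)" using EG by (metis mult.left_commute)
  finally have "(?E + 1) * (fps_X * W) = (?E + 1) * (2 * G)" .
  moreover have "?E + 1 \<noteq> 0"
  proof
    assume "?E + 1 = 0"
    then have "fps_nth (?E + 1) 0 = 0" by simp
    then show False by simp
  qed
  ultimately show ?thesis by (simp add: G_def)
qed

lemma ffac_Suc: "ffac x (Suc k) = ffac x k * (x - real k)"
  by (simp add: ffac_def)

lemma deg_ff_Suc: "deg_ff l x (Suc n) = deg_ff l x n * (x - real n * l)"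
  by (simp add: deg_ff_def)

lemma S2_zero: "n < k \<Longrightarrow> S2 l n k = 0"
  by (induction n arbitrary: k) auto

lemma S2_expand: "deg_ff l x n = (\<Sum>k\<le>n. S2 l n k * ffac x k)"
proof (induction n)
  case 0
  then show ?case by (simp add: deg_ff_def ffac_def)
next
  case (Suc n)
  have "deg_ff l x (Suc n) = (\<Sum>k\<le>n. S2 l n k * ffac x k * (x - real n * l))"
    by (simp add: deg_ff_Suc Suc sum_distrib_right)
  also have "\<dots> = (\<Sum>k\<le>n. S2 l n k * ffac x (Suc k)) + (\<Sum>k\<le>n. (real k - real n * l) * S2 l n k * ffac x k)"
    by (simp add: ffac_Suc sum.distrib[symmetric] algebra_simps)
  also have "(\<Sum>k\<le>n. S2 l n k * ffac x (Suc k)) = (\<Sum>k\<le>Suc n. (if k = 0 then 0 else S2 l n (k - 1)) * ffac x k)"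
    by (subst sum.atMost_Suc_shift) simp
  also have "(\<Sum>k\<le>n. (real k - real n * l) * S2 l n k * ffac x k) = (\<Sum>k\<le>Suc n. (real k - real n * l) * S2 l n k * ffac x k)"
    by (simp add: S2_zero)
  also have "(\<Sum>k\<le>Suc n. (if k = 0 then 0 else S2 l n (k - 1)) * ffac x k) + (\<Sum>k\<le>Suc n. (real k - real n * l) * S2 l n k * ffac x k)
      = (\<Sum>k\<le>Suc n. S2 l (Suc n) k * ffac x k)"
    by (simp add: sum.distrib[symmetric] algebra_simps)
  finally show ?case .
qed

lemma ffac_basis_unique:
  assumes h: "\<And>x. (\<Sum>j\<le>n. e j * ffac x j) = 0"
  shows "k \<le> n \<Longrightarrow> e k = 0"
proof (induction k rule: less_induct)
  case (less k)
  have z: "ffac (real k) j = 0" if "k < j" for j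
    unfolding ffac_def using that by (intro prod_zero) auto
  have nz: "ffac (real k) k \<noteq> 0"
    unfolding ffac_def by (intro prod_pos[THEN less_imp_neq, THEN not_sym]) auto
  have "0 = (\<Sum>j\<le>n. e j * ffac (real k) j)" using h by simp
  also have "\<dots> = (\<Sum>j\<in>{k}. e j * ffac (real k) j)"
  proof (rule sum.mono_neutral_right)
    show "\<forall>j\<in>{..n} - {k}. e j * ffac (real k) j = 0"
    proof
      fix j assume "j \<in> {..n} - {k}"
      then consider "j < k" | "k < j" by force
      then show "e j * ffac (real k) j = 0"
        by cases (use less z in auto)
    qed
  qed (use less in auto)
  finally show ?case using nz by simp
qed

lemma deg_stirling2_eq: "deg_stirling2 l n = S2 l n"
  unfolding deg_stirling2_def
proof (rule the_equality)
  show "(\<forall>x. deg_ff l x n = (\<Sum>k\<le>n. S2 l n k * ffac x k)) \<and> (\<forall>k>n. S2 l n k = 0)"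
    using S2_expand S2_zero by blast
next
  fix c
  assume c: "(\<forall>x. deg_ff l x n = (\<Sum>k\<le>n. c k * ffac x k)) \<and> (\<forall>k>n. c k = 0)"
  show "c = S2 l n"
  proof
    fix k
    show "c k = S2 l n k"
    proof (cases "k \<le> n")
      case True
      have "\<And>x. (\<Sum>j\<le>n. (c j - S2 l n j) * ffac x j) = 0"
        using c S2_expand by (simp add: sum_subtractf algebra_simps)
      from ffac_basis_unique[OF this True] show ?thesis by simp
    next
      case False
      then show ?thesis using c S2_zero by simp
    qed
  qed
qed

lemma Ef_sums:
  assumes "l \<noteq> 0" "\<bar>l * t\<bar> < 1"
  shows "(\<lambda>n. fps_nth (Ef l) n * t^n) sums deg_exp l t"
proof -
  have "(\<lambda>n. ((1/l) gchoose n) * (l*t)^n) sums (1 + l*t) powr (1/l)"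
    using gen_binomial_real[OF assms(2)] .
  then show ?thesis by (simp add: Ef_def deg_exp_def power_mult_distrib mult_ac)
qed

lemma Ef_expansion:
  assumes l: "l \<noteq> 0"
  shows "deg_exp l has_fps_expansion Ef l"
proof -
  have t0: "\<bar>l * (1/(2*\<bar>l\<bar>))\<bar> < 1" using l by (simp add: abs_mult)
  have "summable (\<lambda>n. fps_nth (Ef l) n * (1/(2*\<bar>l\<bar>))^n)"
    using Ef_sums[OF l t0] by (rule sums_summable)
  then have "fps_conv_radius (Ef l) \<ge> norm (1/(2*\<bar>l\<bar>))"
    unfolding fps_conv_radius_def by (rule conv_radius_geI)
  moreover have "norm (1/(2*\<bar>l\<bar>)) > 0" using l by simp
  ultimately have rad: "fps_conv_radius (Ef l) > 0"
    by (metis ereal_less(2) order_less_le_trans zero_ereal_def)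
  have "eventually (\<lambda>t. t \<in> ball 0 (1/\<bar>l\<bar>)) (nhds (0::real))"
    using l by (intro eventually_nhds_in_open) auto
  then have "eventually (\<lambda>t. eval_fps (Ef l) t = deg_exp l t) (nhds 0)"
  proof (rule eventually_mono)
    fix t :: real assume "t \<in> ball 0 (1/\<bar>l\<bar>)"
    then have "\<bar>l * t\<bar> < 1" using l by (simp add: abs_mult field_simps)
    from Ef_sums[OF l this] show "eval_fps (Ef l) t = deg_exp l t"
      by (simp add: eval_fps_def sums_iff)
  qed
  with rad show ?thesis by (simp add: has_fps_expansion_def)
qed

lemma exp_zero_unique:
  fixes f :: "real \<Rightarrow> real"
  assumes f: "f has_fps_expansion H" and ev: "eventually (\<lambda>t. f t = 0) (nhds 0)"
  shows "H = 0"
proof (rule ccontr)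
  assume H: "H \<noteq> 0"
  define k where "k = subdegree H"
  have nz: "fps_nth H k \<noteq> 0" using H by (simp add: k_def)
  define g where "g = (\<lambda>x. if x = 0 then fps_nth H k else f x / x ^ k)"
  have "g has_fps_expansion fps_shift k H"
    unfolding g_def by (rule has_fps_expansion_shift[OF f]) (simp_all add: k_def)
  then have "continuous (at 0 within UNIV) g" by (rule has_fps_expansion_imp_continuous)
  then have "(g \<longlongrightarrow> g 0) (at 0)" by (simp add: continuous_at)
  then have e1: "eventually (\<lambda>x. g x \<noteq> 0) (at 0)"
    by (rule tendsto_imp_eventually_ne) (simp add: g_def nz)
  have e2: "eventually (\<lambda>x. g x = 0) (at 0)"
    unfolding eventually_at_filter
    using ev by (rule eventually_mono) (simp add: g_def)
  have "eventually (\<lambda>x::real. False) (at 0)"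
    using eventually_conj[OF e1 e2] by (rule eventually_mono) simp
  then show False by simp
qed

lemma deg_exp_0 [simp]: "deg_exp l 0 = 1" by (simp add: deg_exp_def)

lemma deg_exp_ne1:
  assumes "l \<noteq> 0" "t \<noteq> 0" "\<bar>l * t\<bar> < 1"
  shows "deg_exp l t \<noteq> 1"
proof
  assume "deg_exp l t = 1"
  have pos: "1 + l * t > 0" using assms(3) by linarith
  then have "exp (1/l * ln (1 + l*t)) = 1" using \<open>deg_exp l t = 1\<close> by (simp add: deg_exp_def powr_def)
  then have "1/l * ln (1 + l*t) = 0" by simp
  then have "ln (1 + l*t) = 0" using assms(1) by simp
  then have "1 + l*t = 1" using pos by simp
  then show False using assms by simp
qed

definition Pc :: "real \<Rightarrow> (nat \<Rightarrow> real) \<Rightarrow> bool" where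
  "Pc mu b = (\<exists>r>0. \<forall>t. 0 < \<bar>t\<bar> \<and> \<bar>t\<bar> < r \<longrightarrow>
       (\<lambda>n. b n * t ^ n / fact n) sums (t / (deg_exp mu t - 1)))"

lemma carlitz_fps:
  assumes l: "l \<noteq> 0" and P: "Pc l b"
  shows "(Ef l - 1) * Abs_fps (\<lambda>n. b n / fact n) = fps_X"
proof -
  define B where "B = Abs_fps (\<lambda>n. b n / fact n)"
  obtain r where r: "r > 0" and hr: "\<And>t. 0 < \<bar>t\<bar> \<Longrightarrow> \<bar>t\<bar> < r \<Longrightarrow>
       (\<lambda>n. b n * t ^ n / fact n) sums (t / (deg_exp l t - 1))"
    using P unfolding Pc_def by blast
  have sB: "(\<lambda>n. fps_nth B n * t^n) sums (t / (deg_exp l t - 1))" if "0 < \<bar>t\<bar>" "\<bar>t\<bar> < r" for t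
    using hr[OF that] by (simp add: B_def)
  have "summable (\<lambda>n. fps_nth B n * (r/2)^n)"
    using sB[of "r/2"] r by (intro sums_summable) auto
  then have "fps_conv_radius B \<ge> norm (r/2)"
    unfolding fps_conv_radius_def by (rule conv_radius_geI)
  moreover have "norm (r/2) > 0" using r by simp
  ultimately have rad: "fps_conv_radius B > 0"
    by (metis ereal_less(2) order_less_le_trans zero_ereal_def)
  have exB: "eval_fps B has_fps_expansion B"
    using rad by (rule eval_fps_has_fps_expansion)
  have exE: "deg_exp l has_fps_expansion Ef l" by (rule Ef_expansion[OF l])
  have exH: "(\<lambda>t. (deg_exp l t - 1) * eval_fps B t - t) has_fps_expansion ((Ef l - 1) * B - fps_X)"
    by (intro has_fps_expansion_diff has_fps_expansion_mult exB exE has_fps_expansion_1 has_fps_expansion_fps_X)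
  have ev1: "eventually (\<lambda>t. t \<in> eball 0 (fps_conv_radius B)) (nhds (0::real))"
    using rad by (intro eventually_nhds_in_open) (auto simp: zero_ereal_def)
  have ev2: "eventually (\<lambda>t. t \<in> ball 0 (min r (1/\<bar>l\<bar>))) (nhds (0::real))"
    using l r by (intro eventually_nhds_in_open) auto
  have "eventually (\<lambda>t. (deg_exp l t - 1) * eval_fps B t - t = 0) (nhds 0)"
    using ev1 ev2
  proof eventually_elim
    case (elim t)
    show ?case
    proof (cases "t = 0")
      case True then show ?thesis by simp
    next
      case False
      have a: "\<bar>t\<bar> < r" "\<bar>l * t\<bar> < 1" using elim l by (auto simp: abs_mult field_simps)
      have "(\<lambda>n. fps_nth B n * t^n) sums eval_fps B t"
        using elim by (intro sums_eval_fps) simp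
      moreover have "(\<lambda>n. fps_nth B n * t^n) sums (t / (deg_exp l t - 1))"
        using sB[of t] False a by simp
      ultimately have "eval_fps B t = t / (deg_exp l t - 1)" by (rule sums_unique2)
      moreover have "deg_exp l t - 1 \<noteq> 0" using deg_exp_ne1[OF l False a(2)] by simp
      ultimately show ?thesis by simp
    qed
  qed
  from exp_zero_unique[OF exH this] show ?thesis by (simp add: B_def)
qed

lemma carlitz_exists:
  assumes l: "l \<noteq> 0"
  shows "\<exists>b. Pc l b"
proof -
  define D where "D = Ef l - 1"
  have exD: "(\<lambda>t. deg_exp l t - 1) has_fps_expansion D"
    unfolding D_def by (intro has_fps_expansion_diff Ef_expansion[OF l] has_fps_expansion_1)
  have D1: "fps_nth D 1 = 1" using D_1[OF l] by (simp add: D_def)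
  have "D \<noteq> 0" using D1 by auto
  then have sd: "1 \<le> subdegree D" by (intro subdegree_geI) (auto simp: D_def)
  have exQ: "(\<lambda>x. if x = 0 then fps_nth D 1 else (deg_exp l x - 1) / x ^ 1) has_fps_expansion fps_shift 1 D"
    by (rule has_fps_expansion_shift[OF exD sd]) simp
  define g where "g = (\<lambda>x. if x = 0 then fps_nth D 1 else (deg_exp l x - 1) / x ^ 1)"
  have "fps_nth (fps_shift 1 D) 0 \<noteq> 0" using D1 by simp
  from has_fps_expansion_inverse[OF exQ[folded g_def] this]
  have exInv: "(\<lambda>x. inverse (g x)) has_fps_expansion inverse (fps_shift 1 D)" .
  define Bi where "Bi = inverse (fps_shift 1 D)"
  have rad: "fps_conv_radius Bi > 0" and evI: "eventually (\<lambda>t. eval_fps Bi t = inverse (g t)) (nhds 0)"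
    using exInv by (auto simp: has_fps_expansion_def Bi_def)
  have ev1: "eventually (\<lambda>t. t \<in> eball 0 (fps_conv_radius Bi)) (nhds (0::real))"
    using rad by (intro eventually_nhds_in_open) (auto simp: zero_ereal_def)
  have "eventually (\<lambda>t. t \<in> eball 0 (fps_conv_radius Bi) \<and> eval_fps Bi t = inverse (g t)) (nhds 0)"
    using ev1 evI by (rule eventually_conj)
  then obtain d where d: "d > 0" and hd: "\<And>t. dist t 0 < d \<Longrightarrow> t \<in> eball 0 (fps_conv_radius Bi) \<and> eval_fps Bi t = inverse (g t)"
    unfolding eventually_nhds_metric by blast
  have "Pc l (\<lambda>n. fps_nth Bi n * fact n)"
    unfolding Pc_def
  proof (intro exI[of _ d] conjI allI impI d)
    fix t :: real assume t: "0 < \<bar>t\<bar> \<and> \<bar>t\<bar> < d"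
    then have h: "t \<in> eball 0 (fps_conv_radius Bi)" "eval_fps Bi t = inverse (g t)" using hd[of t] by auto
    have "(\<lambda>n. fps_nth Bi n * t^n) sums eval_fps Bi t"
      using h(1) by (intro sums_eval_fps) simp
    also have "eval_fps Bi t = t / (deg_exp l t - 1)"
      using h(2) t by (simp add: g_def field_simps)
    finally show "(\<lambda>n. fps_nth Bi n * fact n * t ^ n / fact n) sums (t / (deg_exp l t - 1))"
      by simp
  qed
  then show ?thesis by blast
qed

lemma carlitz_rel:
  assumes l: "l \<noteq> 0"
  shows "(Ef l - 1) * Abs_fps (\<lambda>n. carlitz_bernoulli l n / fact n) = fps_X"
proof -
  have cb: "carlitz_bernoulli l = (THE b. Pc l b)"
    by (simp add: carlitz_bernoulli_def Pc_def)
  obtain b0 where b0: "Pc l b0" using carlitz_exists[OF l] by blast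
  have nz: "Ef l - 1 \<noteq> 0"
  proof
    assume "Ef l - 1 = 0"
    then have "fps_nth (Ef l - 1) 1 = 0" by simp
    with D_1[OF l] show False by simp
  qed
  have uniq: "b = b0" if "Pc l b" for b
  proof -
    have "(Ef l - 1) * Abs_fps (\<lambda>n. b n / fact n) = (Ef l - 1) * Abs_fps (\<lambda>n. b0 n / fact n)"
      using carlitz_fps[OF l that] carlitz_fps[OF l b0] by simp
    then have "Abs_fps (\<lambda>n. b n / fact n) = Abs_fps (\<lambda>n. b0 n / fact n)" using nz by simp
    then have "\<And>n. b n / fact n = b0 n / fact n" by (metis fps_nth_Abs_fps)
    then show ?thesis by (intro ext) (simp add: field_simps)
  qed
  have "Pc l (THE b. Pc l b)" using b0 uniq by (rule theI)
  then show ?thesis unfolding cb by (rule carlitz_fps[OF l])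
qed

theorem theorem8:
  fixes lam :: real and n :: nat
  assumes "lam \<noteq> 0"
  shows "(\<Sum>k\<le>n. deg_stirling2 lam n k * (1/2) ^ k * (-1) ^ k * fact k) = deg_geom lam n (-1/2)
       \<and> deg_geom lam n (-1/2)
           = 2 / (real n + 1) * (carlitz_bernoulli lam (n+1) - 2 ^ (n+1) * carlitz_bernoulli (lam/2) (n+1))"
proof
  show "(\<Sum>k\<le>n. deg_stirling2 lam n k * (1/2) ^ k * (-1) ^ k * fact k) = deg_geom lam n (-1/2)"
    unfolding deg_geom_def
  proof (rule sum.cong)
    fix k
    have "(-1/2::real)^k = (1/2)^k * (-1)^k" by (simp add: power_mult_distrib[symmetric])
    then show "deg_stirling2 lam n k * (1/2) ^ k * (-1) ^ k * fact k = deg_stirling2 lam n k * fact k * (-1/2) ^ k"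
      by (simp add: mult_ac)
  qed simp
next
  have l: "lam \<noteq> 0" by fact
  have l2: "lam / 2 \<noteq> 0" using l by simp
  define c :: real where "c = -1/2"
  define D where "D = Ef lam - 1"
  define W where "W = Abs_fps (\<lambda>n. \<Sum>k\<le>n. c^k * fps_nth (D^k) n)"
  have W1: "W * (1 - fps_const c * D) = 1"
    unfolding W_def by (rule W_fps) (simp add: D_def)
  have E2: "Ef lam + 1 = 2 * (1 - fps_const c * D)"
  proof (rule fps_ext)
    fix m show "fps_nth (Ef lam + 1) m = fps_nth (2 * (1 - fps_const c * D)) m"
      by (cases m) (simp_all add: D_def c_def numeral_fps_const)
  qed
  have hW: "W * (Ef lam + 1) = 2"
  proof -
    have "W * (Ef lam + 1) = 2 * (W * (1 - fps_const c * D))" unfolding E2 by (simp only: mult_ac)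
    then show ?thesis using W1 by simp
  qed
  define B where "B = Abs_fps (\<lambda>n. carlitz_bernoulli lam n / fact n)"
  define B2 where "B2 = Abs_fps (\<lambda>n. carlitz_bernoulli (lam/2) n / fact n)"
  have XW: "fps_X * W = 2 * (B - sc 2 B2)"
    using main_alg[OF l carlitz_rel[OF l, folded B_def] carlitz_rel[OF l2, folded B2_def] hW] .
  have "fps_nth (fps_X * W) (Suc n) = fps_nth (2 * (B - sc 2 B2)) (Suc n)" using XW by simp
  then have Wn: "(\<Sum>k\<le>n. c^k * fps_nth (D^k) n)
      = 2 * (carlitz_bernoulli lam (n+1) / fact (n+1) - 2^(n+1) * (carlitz_bernoulli (lam/2) (n+1) / fact (n+1)))"
    by (simp add: W_def B_def B2_def sc_def)
  have "deg_geom lam n (-1/2) = (\<Sum>k\<le>n. fact n * (c^k * fps_nth (D^k) n))"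
    unfolding deg_geom_def deg_stirling2_eq
    by (rule sum.cong) (simp_all add: S2_fps[OF l] D_def c_def)
  also have "\<dots> = fact n * (\<Sum>k\<le>n. c^k * fps_nth (D^k) n)" by (simp add: sum_distrib_left)
  also have "\<dots> = fact n * (2 * (carlitz_bernoulli lam (n+1) / fact (n+1) - 2^(n+1) * (carlitz_bernoulli (lam/2) (n+1) / fact (n+1))))"
    by (simp only: Wn)
  also have "\<dots> = 2 / (real n + 1) * (carlitz_bernoulli lam (n+1) - 2 ^ (n+1) * carlitz_bernoulli (lam/2) (n+1))"
  proof -
    have f: "(fact (n+1)::real) = (real n + 1) * fact n" by simp
    have "(fact n::real) \<noteq> 0" "real n + 1 \<noteq> 0" by simp_all
    have gen: "\<And>a b p f m::real. f \<noteq> 0 \<Longrightarrow> m \<noteq> 0 \<Longrightarrow>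
        f * (2 * (a / (m * f) - p * (b / (m * f)))) = 2 / m * (a - p * b)"
      by (simp add: field_simps)
    show ?thesis unfolding f by (rule gen) (simp_all)
  qed
  finally show "deg_geom lam n (-1/2)
           = 2 / (real n + 1) * (carlitz_bernoulli lam (n+1) - 2 ^ (n+1) * carlitz_bernoulli (lam/2) (n+1))" .
qed

end
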